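(* Let $K$ be a locally compact hypergroup with a left Haar measure and let $\sigma$ be a non-degenerate probability measure on $K$. Then every bounded continuous $\sigma$-harmonic function on $K$ vanishing at infinity is constant.
   Context: $K$ is a locally compact hypergroup (Jewett/Bloom–Heyer sense) with involution $x\mapsto\check x$, assumed to have a left Haar measure. For a Borel function $f$, $f(x*y)=\int_K f\,d(\delta_x*\delta_y)$, and for $\mu\in M(K)$, $(\mu*f)(x)=\int_K f(\check y*x)\,d\mu(y)$; $f$ is $\sigma$-harmonic if $\sigma*f=f$. For subsets $A,B\subseteq K$, $A*B=\bigcup_{a\in A,b\in B}\operatorname{supp}(\delta_a*\delta_b)$ and $A^n$ is the $n$-fold product. A measure $\mu\in M(K)$ is non-degenerate if $K=\overline{\bigcup_{n\geq1}(\operatorname{supp}|\mu|)^n}$. *)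

theory Defs
  imports "HOL-Probability.Probability"
begin

definition msupp :: "'a::topological_space measure \<Rightarrow> 'a set" where
  "msupp \<mu> = {x. \<forall>U. open U \<longrightarrow> x \<in> U \<longrightarrow> emeasure \<mu> U > 0}"

text \<open>f(x*y) = integral of f against delta_x * delta_y; here conv x y models delta_x * delta_y.\<close>
definition hval :: "('a::topological_space \<Rightarrow> 'a \<Rightarrow> 'a measure) \<Rightarrow> ('a \<Rightarrow> complex) \<Rightarrow> 'a \<Rightarrow> 'a \<Rightarrow> complex" where
  "hval conv f x y = (\<integral>z. f z \<partial>(conv x y))"

definition bcontinuous :: "('a::topological_space \<Rightarrow> real) \<Rightarrow> bool" where
  "bcontinuous f \<longleftrightarrow> continuous_on UNIV f \<and> bounded (range f)"

text \<open>Jewett / Bloom--Heyer axioms for a locally compact hypergroup, expressed via the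
  convolution of point masses conv x y = delta_x * delta_y, the involution invol and identity e.
  (The convolution on M(K) is determined by the point-mass convolutions.)\<close>
definition hypergroup :: "('a::t2_space \<Rightarrow> 'a \<Rightarrow> 'a measure) \<Rightarrow> ('a \<Rightarrow> 'a) \<Rightarrow> 'a \<Rightarrow> bool" where
  "hypergroup conv invol e \<longleftrightarrow>
     locally_compact_space (euclidean :: 'a topology) \<and>
     \<comment> \<open>delta_x * delta_y is a Borel probability measure with compact support\<close>
     (\<forall>x y. sets (conv x y) = sets borel \<and> prob_space (conv x y) \<and> compact (msupp (conv x y))) \<and>
     \<comment> \<open>associativity\<close>
     (\<forall>x y w f. bcontinuous f \<longrightarrow>
        (\<integral>z. (\<integral>u. f u \<partial>(conv z w)) \<partial>(conv x y)) =
        (\<integral>z. (\<integral>u. f u \<partial>(conv x z)) \<partial>(conv y w))) \<and>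
     \<comment> \<open>weak continuity of (x,y) to delta_x * delta_y\<close>
     (\<forall>f. bcontinuous f \<longrightarrow> continuous_on UNIV (\<lambda>p. \<integral>z. f z \<partial>(conv (fst p) (snd p)))) \<and>
     \<comment> \<open>continuity of (x,y) to supp(delta_x * delta_y) for the Michael topology\<close>
     (\<forall>U. open U \<longrightarrow> open {p. msupp (conv (fst p) (snd p)) \<inter> U \<noteq> {}}
                    \<and> open {p. msupp (conv (fst p) (snd p)) \<subseteq> U}) \<and>
     \<comment> \<open>identity\<close>
     (\<forall>x. conv e x = return borel x \<and> conv x e = return borel x) \<and>
     \<comment> \<open>involution: homeomorphism of order 2, anti-automorphism of convolution\<close>
     continuous_on UNIV invol \<and> (\<forall>x. invol (invol x) = x) \<and>
     (\<forall>x y. distr (conv x y) borel invol = conv (invol y) (invol x)) \<and>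
     \<comment> \<open>e in supp(delta_x * delta_(invol y)) iff x = y\<close>
     (\<forall>x y. e \<in> msupp (conv x (invol y)) \<longleftrightarrow> x = y)"

definition left_haar :: "('a::t2_space \<Rightarrow> 'a \<Rightarrow> 'a measure) \<Rightarrow> 'a measure \<Rightarrow> bool" where
  "left_haar conv haar \<longleftrightarrow>
     sets haar = sets borel \<and> emeasure haar UNIV \<noteq> 0 \<and>
     (\<forall>C. compact C \<longrightarrow> emeasure haar C < \<infinity>) \<and>
     (\<forall>U. open U \<longrightarrow> U \<noteq> {} \<longrightarrow> emeasure haar U > 0) \<and>
     (\<forall>f::'a \<Rightarrow> real. continuous_on UNIV f \<longrightarrow> compact (closure {x. f x \<noteq> 0}) \<longrightarrow>
        (\<forall>x. (\<integral>y. (\<integral>z. f z \<partial>(conv x y)) \<partial>haar) = (\<integral>y. f y \<partial>haar)))"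

definition hset_prod :: "('a::topological_space \<Rightarrow> 'a \<Rightarrow> 'a measure) \<Rightarrow> 'a set \<Rightarrow> 'a set \<Rightarrow> 'a set" where
  "hset_prod conv A B = (\<Union>a\<in>A. \<Union>b\<in>B. msupp (conv a b))"

fun hset_pow :: "('a::topological_space \<Rightarrow> 'a \<Rightarrow> 'a measure) \<Rightarrow> 'a set \<Rightarrow> nat \<Rightarrow> 'a set" where
  "hset_pow conv A 0 = A"   \<comment> \<open>unused: only n >= 1 is used\<close>
| "hset_pow conv A (Suc 0) = A"
| "hset_pow conv A (Suc (Suc n)) = hset_prod conv (hset_pow conv A (Suc n)) A"

definition nondegenerate :: "('a::topological_space \<Rightarrow> 'a \<Rightarrow> 'a measure) \<Rightarrow> 'a measure \<Rightarrow> bool" where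
  "nondegenerate conv \<sigma> \<longleftrightarrow> UNIV = closure (\<Union>n\<in>{1..}. hset_pow conv (msupp \<sigma>) n)"

definition harmonic :: "('a::topological_space \<Rightarrow> 'a \<Rightarrow> 'a measure) \<Rightarrow> ('a \<Rightarrow> 'a) \<Rightarrow> 'a measure \<Rightarrow> ('a \<Rightarrow> complex) \<Rightarrow> bool" where
  "harmonic conv invol \<sigma> f \<longleftrightarrow> (\<forall>x. (\<integral>y. hval conv f (invol y) x \<partial>\<sigma>) = f x)"

definition vanishes_at_infinity :: "('a::topological_space \<Rightarrow> complex) \<Rightarrow> bool" where
  "vanishes_at_infinity f \<longleftrightarrow> (\<forall>\<epsilon>>0. \<exists>C. compact C \<and> (\<forall>x. x \<notin> C \<longrightarrow> norm (f x) < \<epsilon>))"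

end

theory Submission
  imports Defs
begin

lemma bc_meas: "continuous_on UNIV g \<Longrightarrow> sets M = sets borel \<Longrightarrow> g \<in> borel_measurable M"
  using borel_measurable_continuous_onI measurable_cong_sets by blast

lemma bnd_norm: "bounded (range g) \<Longrightarrow> \<exists>B. \<forall>x. norm (g x) \<le> B"
  unfolding bounded_iff by simp

lemma bnd_real: "bounded (range (g::'a::topological_space \<Rightarrow> real)) \<Longrightarrow> \<exists>B. \<forall>x. \<bar>g x\<bar> \<le> B"
  using bnd_norm[of g] by simp

lemma bc_integrable:
  fixes g :: "'a::topological_space \<Rightarrow> 'b::{banach,second_countable_topology}"
  assumes "prob_space M" "sets M = sets borel" "continuous_on UNIV g" "bounded (range g)"
  shows "integrable M g"
proof -
  interpret prob_space M by fact
  obtain B where B: "\<And>x. norm (g x) \<le> B" using bnd_norm[OF assms(4)] by blast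
  show ?thesis
    by (rule integrable_const_bound[where B=B]) (use B bc_meas[OF assms(3,2)] in auto)
qed

lemma bc_int_bound:
  fixes g :: "'a::topological_space \<Rightarrow> 'b::{banach,second_countable_topology}"
  assumes "prob_space M" "sets M = sets borel" "continuous_on UNIV g" "\<And>x. norm (g x) \<le> B"
  shows "norm (integral\<^sup>L M g) \<le> B"
proof -
  interpret prob_space M by fact
  have bd: "bounded (range g)" unfolding bounded_iff by (intro exI[of _ B]) (simp add: assms(4))
  have i: "integrable M g" by (rule bc_integrable[OF assms(1,2,3) bd])
  have "norm (integral\<^sup>L M g) \<le> (\<integral>x. norm (g x) \<partial>M)" by (rule integral_norm_bound)
  also have "\<dots> \<le> (\<integral>x. B \<partial>M)"
    by (rule integral_mono) (use i assms(4) in auto)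
  also have "\<dots> = B" by (simp add: prob_space)
  finally show ?thesis .
qed

lemma supp_zero:
  fixes k :: "'a::topological_space \<Rightarrow> real"
  assumes "sets M = sets borel" "integrable M k" "continuous_on UNIV k" "\<And>y. k y \<ge> 0"
    "integral\<^sup>L M k = 0" "x \<in> msupp M"
  shows "k x = 0"
proof (rule ccontr)
  assume "k x \<noteq> 0"
  hence kx: "k x > 0" using assms(4)[of x] by auto
  have sp: "space M = UNIV" using sets_eq_imp_space_eq[OF assms(1)] by simp
  have ae: "AE y in M. k y = 0"
    using integral_nonneg_eq_0_iff_AE[OF assms(2)] assms(4,5) by auto
  let ?U = "{y. k x / 2 < k y}"
  have opn: "open ?U" by (rule open_Collect_less) (use assms(3) in \<open>auto intro: continuous_intros\<close>)
  have pos: "emeasure M ?U > 0" using assms(6) opn kx unfolding msupp_def by auto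
  have N: "{y \<in> space M. k y \<noteq> 0} \<in> sets M"
    using bc_meas[OF assms(3,1)] by measurable
  have "emeasure M {y \<in> space M. k y \<noteq> 0} = 0"
    using AE_iff_measurable[OF N] ae by auto
  moreover have "emeasure M ?U \<le> emeasure M {y \<in> space M. k y \<noteq> 0}"
    by (rule emeasure_mono) (use sp kx N in auto)
  ultimately show False using pos by auto
qed

locale hg =
  fixes conv :: "'a::t2_space \<Rightarrow> 'a \<Rightarrow> 'a measure" and invol :: "'a \<Rightarrow> 'a" and e :: 'a
  assumes hg: "hypergroup conv invol e"
begin

lemma H: "locally_compact_space (euclidean :: 'a topology) \<and>
     (\<forall>x y. sets (conv x y) = sets borel \<and> prob_space (conv x y) \<and> compact (msupp (conv x y))) \<and>
     (\<forall>x y w f. bcontinuous f \<longrightarrow>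
        (\<integral>z. (\<integral>u. f u \<partial>(conv z w)) \<partial>(conv x y)) =
        (\<integral>z. (\<integral>u. f u \<partial>(conv x z)) \<partial>(conv y w))) \<and>
     (\<forall>f. bcontinuous f \<longrightarrow> continuous_on UNIV (\<lambda>p. \<integral>z. f z \<partial>(conv (fst p) (snd p)))) \<and>
     (\<forall>U. open U \<longrightarrow> open {p. msupp (conv (fst p) (snd p)) \<inter> U \<noteq> {}}
                    \<and> open {p. msupp (conv (fst p) (snd p)) \<subseteq> U}) \<and>
     (\<forall>x. conv e x = return borel x \<and> conv x e = return borel x) \<and>
     continuous_on UNIV invol \<and> (\<forall>x. invol (invol x) = x) \<and>
     (\<forall>x y. distr (conv x y) borel invol = conv (invol y) (invol x)) \<and>
     (\<forall>x y. e \<in> msupp (conv x (invol y)) \<longleftrightarrow> x = y)"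
  using hg unfolding hypergroup_def .

lemma conv_sets: "sets (conv x y) = sets borel"
  using H[THEN conjunct2, THEN conjunct1, rule_format, of x y] by (rule conjunct1)

lemma conv_prob: "prob_space (conv x y)"
  using H[THEN conjunct2, THEN conjunct1, rule_format, of x y] by (elim conjE)

lemma assoc: "bcontinuous f \<Longrightarrow>
        (\<integral>z. (\<integral>u. f u \<partial>(conv z w)) \<partial>(conv x y)) =
        (\<integral>z. (\<integral>u. f u \<partial>(conv x z)) \<partial>(conv y w))"
  by (rule H[THEN conjunct2, THEN conjunct2, THEN conjunct1, rule_format])

lemma wc: "bcontinuous f \<Longrightarrow> continuous_on UNIV (\<lambda>p. \<integral>z. f z \<partial>(conv (fst p) (snd p)))"
  by (rule H[THEN conjunct2, THEN conjunct2, THEN conjunct2, THEN conjunct1, rule_format])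

lemma conv_e: "conv x e = return borel x"
  using H[THEN conjunct2, THEN conjunct2, THEN conjunct2, THEN conjunct2, THEN conjunct2, THEN conjunct1, rule_format, of x]
  by (elim conjE)

lemma invol_cont: "continuous_on UNIV invol"
  by (rule H[THEN conjunct2, THEN conjunct2, THEN conjunct2, THEN conjunct2, THEN conjunct2, THEN conjunct2, THEN conjunct1])

lemma invol_invol: "invol (invol x) = x"
  by (rule H[THEN conjunct2, THEN conjunct2, THEN conjunct2, THEN conjunct2, THEN conjunct2, THEN conjunct2, THEN conjunct2, THEN conjunct1, rule_format])

lemma distr_ax: "distr (conv x y) borel invol = conv (invol y) (invol x)"
  by (rule H[THEN conjunct2, THEN conjunct2, THEN conjunct2, THEN conjunct2, THEN conjunct2, THEN conjunct2, THEN conjunct2, THEN conjunct2, THEN conjunct1, rule_format])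

lemma e_supp: "e \<in> msupp (conv x (invol y)) \<longleftrightarrow> x = y"
  by (rule H[THEN conjunct2, THEN conjunct2, THEN conjunct2, THEN conjunct2, THEN conjunct2, THEN conjunct2, THEN conjunct2, THEN conjunct2, THEN conjunct2, rule_format])

lemma wc1: assumes "bcontinuous f" shows "continuous_on UNIV (\<lambda>t. \<integral>u. f u \<partial>(conv t z))"
proof -
  have c: "continuous_on UNIV (\<lambda>t::'a. (t, z))" by (intro continuous_on_Pair continuous_on_id continuous_on_const)
  from continuous_on_compose2[OF wc[OF assms] c] show ?thesis by simp
qed

lemma wc2: assumes "bcontinuous f" shows "continuous_on UNIV (\<lambda>t. \<integral>u. f u \<partial>(conv z t))"
proof -
  have c: "continuous_on UNIV (\<lambda>t::'a. (z, t))" by (intro continuous_on_Pair continuous_on_id continuous_on_const)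
  from continuous_on_compose2[OF wc[OF assms] c] show ?thesis by simp
qed

lemma wc3: assumes "bcontinuous f" shows "continuous_on UNIV (\<lambda>t. \<integral>u. f u \<partial>(conv (invol t) z))"
proof -
  have c: "continuous_on UNIV (\<lambda>t::'a. (invol t, z))" by (intro continuous_on_Pair invol_cont continuous_on_const)
  from continuous_on_compose2[OF wc[OF assms] c] show ?thesis by simp
qed

lemma conv_bound:
  assumes "continuous_on UNIV (f::'a\<Rightarrow>real)" "\<And>x. \<bar>f x\<bar> \<le> B"
  shows "\<bar>\<integral>u. f u \<partial>(conv x y)\<bar> \<le> B"
  using bc_int_bound[OF conv_prob conv_sets assms(1), of B] assms(2) by auto

lemma supp_invol:
  assumes "u \<in> msupp (conv b a)"
  shows "invol u \<in> msupp (conv (invol a) (invol b))"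
  unfolding msupp_def
proof (intro CollectI allI impI)
  fix U assume U: "open U" "invol u \<in> U"
  have m: "invol \<in> measurable (conv b a) borel"
    using bc_meas[OF invol_cont conv_sets] .
  have "emeasure (conv (invol a) (invol b)) U = emeasure (conv b a) (invol -` U \<inter> space (conv b a))"
    using emeasure_distr[OF m, of U] U distr_ax[of b a] by auto
  also have "invol -` U \<inter> space (conv b a) = invol -` U"
    using sets_eq_imp_space_eq[OF conv_sets] by auto
  finally have eq: "emeasure (conv (invol a) (invol b)) U = emeasure (conv b a) (invol -` U)" .
  have "open (invol -` U)" using open_vimage[OF U(1) invol_cont] .
  then have "emeasure (conv b a) (invol -` U) > 0"
    using assms U(2) unfolding msupp_def by auto
  then show "emeasure (conv (invol a) (invol b)) U > 0" using eq by simp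
qed

lemma bc_T:
  assumes "continuous_on UNIV (f::'a \<Rightarrow> complex)" "\<And>x. norm (f x) \<le> Bf"
    "bounded_linear (T::complex \<Rightarrow> real)" "\<And>w. \<bar>T w\<bar> \<le> norm w"
  shows "bcontinuous (\<lambda>x. T (f x))"
proof -
  have "\<bar>T (f x)\<bar> \<le> Bf" for x using order_trans[OF assms(4) assms(2)] .
  then have "bounded (range (\<lambda>x. T (f x)))" unfolding bounded_iff by (intro exI[of _ Bf]) simp
  moreover have "continuous_on UNIV (\<lambda>x. T (f x))"
    by (rule bounded_linear.continuous_on[OF assms(3,1)])
  ultimately show ?thesis by (simp add: bcontinuous_def)
qed

lemma bd_of: "(\<And>x. \<bar>F x\<bar> \<le> (B::real)) \<Longrightarrow> bounded (range F)"
  unfolding bounded_iff by (intro exI[of _ B]) simp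

lemma core:
  assumes sig: "prob_space \<sigma>" "sets \<sigma> = sets borel" and nd: "nondegenerate conv \<sigma>"
   and hc: "continuous_on UNIV (h::'a \<Rightarrow> real)" and hb: "bounded (range h)" and hnn: "\<And>x. h x \<ge> 0"
   and h0: "h x0 = 0"
   and harm: "\<And>z. (\<integral>y. (\<integral>w. h w \<partial>conv (invol y) z) \<partial>\<sigma>) = h z"
  shows "h x = 0"
proof -
  have bch: "bcontinuous h" using hc hb by (simp add: bcontinuous_def)
  obtain B where B: "\<And>x. \<bar>h x\<bar> \<le> B" using bnd_real[OF hb] by blast
  define I where "I t z = (\<integral>w. h w \<partial>conv t z)" for t z
  have Iint: "integrable (conv t z) h" for t z by (rule bc_integrable[OF conv_prob conv_sets hc hb])
  have Inn: "I t z \<ge> 0" for t z unfolding I_def by (rule integral_nonneg_AE) (simp add: hnn)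
  have Ib: "\<bar>I t z\<bar> \<le> B" for t z using conv_bound[OF hc B] unfolding I_def .
  have Ic1: "continuous_on UNIV (\<lambda>t. I t z)" for z unfolding I_def by (rule wc1[OF bch])
  have Ic2: "continuous_on UNIV (\<lambda>u. I t u)" for t unfolding I_def by (rule wc2[OF bch])
  have Ic3: "continuous_on UNIV (\<lambda>y. I (invol y) z)" for z unfolding I_def by (rule wc3[OF bch])
  define S where "S = {z. h z = 0}"
  define W where "W = {t. \<forall>z\<in>S. I t z = 0}"
  have x0S: "x0 \<in> S" using h0 by (simp add: S_def)
  have AE: "AE w in conv t z. w \<in> S" if "t \<in> W" "z \<in> S" for t z
  proof -
    have "I t z = 0" using that by (simp add: W_def)
    then have "AE w in conv t z. h w = 0"
      using integral_nonneg_eq_0_iff_AE[OF Iint] hnn unfolding I_def by auto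
    then show ?thesis by (simp add: S_def)
  qed
  have Wclosed: "closed W"
  proof -
    have "W = (\<Inter>z\<in>S. {t. I t z = 0})" by (auto simp: W_def)
    moreover have "closed {t. I t z = 0}" for z
      by (rule closed_Collect_eq[OF Ic1 continuous_on_const])
    ultimately show ?thesis by (simp add: closed_INT)
  qed
  have A_W: "invol a \<in> W" if "a \<in> msupp \<sigma>" for a
    unfolding W_def
  proof (intro CollectI ballI)
    fix z assume "z \<in> S"
    have "integral\<^sup>L \<sigma> (\<lambda>y. I (invol y) z) = 0" using harm[of z] \<open>z \<in> S\<close> by (simp add: I_def S_def)
    then show "I (invol a) z = 0"
      using supp_zero[OF sig(2) bc_integrable[OF sig Ic3 bd_of[OF Ib]] Ic3 Inn _ that] by simp
  qed
  have prod_W: "s \<in> W" if "t1 \<in> W" "t2 \<in> W" "s \<in> msupp (conv t1 t2)" for s t1 t2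
    unfolding W_def
  proof (intro CollectI ballI)
    fix z assume z: "z \<in> S"
    have "(\<integral>s'. I s' z \<partial>conv t1 t2) = (\<integral>u. I t1 u \<partial>conv t2 z)" unfolding I_def by (rule assoc[OF bch])
    also have "\<dots> = (\<integral>u. 0 \<partial>conv t2 z)"
    proof (rule integral_cong_AE)
      show "(\<lambda>u. I t1 u) \<in> borel_measurable (conv t2 z)" by (rule bc_meas[OF Ic2 conv_sets])
      show "(\<lambda>u. 0::real) \<in> borel_measurable (conv t2 z)" by simp
      have t1W: "\<And>u. u \<in> S \<Longrightarrow> I t1 u = 0" using that(1) unfolding W_def by blast
      show "AE u in conv t2 z. I t1 u = 0"
        by (rule AE_mp[OF AE[OF that(2) z]], rule AE_I2) (simp add: t1W)
    qed
    finally have "(\<integral>s'. I s' z \<partial>conv t1 t2) = 0" by simp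
    then show "I s z = 0"
      using supp_zero[OF conv_sets bc_integrable[OF conv_prob conv_sets Ic1 bd_of[OF Ib]] Ic1 Inn _ that(3)] by simp
  qed
  have pow_W: "invol b \<in> W" if "b \<in> hset_pow conv (msupp \<sigma>) (Suc n)" for n b
    using that
  proof (induction n arbitrary: b)
    case 0
    then show ?case using A_W by simp
  next
    case (Suc n)
    then obtain b' a where b': "b' \<in> hset_pow conv (msupp \<sigma>) (Suc n)" and a: "a \<in> msupp \<sigma>"
      and bm: "b \<in> msupp (conv b' a)" by (auto simp: hset_prod_def)
    show ?case
      by (rule prod_W[OF A_W[OF a] Suc.IH[OF b'] supp_invol[OF bm]])
  qed
  have "(\<Union>n\<in>{1..}. hset_pow conv (msupp \<sigma>) n) \<subseteq> invol -` W"
  proof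
    fix b assume "b \<in> (\<Union>n\<in>{1..}. hset_pow conv (msupp \<sigma>) n)"
    then obtain n where "n \<ge> 1" "b \<in> hset_pow conv (msupp \<sigma>) n" by auto
    then obtain m where "b \<in> hset_pow conv (msupp \<sigma>) (Suc m)" by (cases n) auto
    then show "b \<in> invol -` W" using pow_W by auto
  qed
  then have "closure (\<Union>n\<in>{1..}. hset_pow conv (msupp \<sigma>) n) \<subseteq> invol -` W"
    by (rule closure_minimal) (rule closed_vimage[OF Wclosed invol_cont])
  note cl = this
  have eq: "UNIV = closure (\<Union>n\<in>{1..}. hset_pow conv (msupp \<sigma>) n)"
    using nd unfolding nondegenerate_def .
  have "UNIV \<subseteq> invol -` W" by (subst eq) (rule cl)
  then have iW: "invol t \<in> W" for t by blast
  have allW: "t \<in> W" for t using iW[of "invol t"] by (simp add: invol_invol)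
  have "(\<integral>t. I t x0 \<partial>conv x (invol x0)) = (\<integral>u. I x u \<partial>conv (invol x0) x0)"
    unfolding I_def by (rule assoc[OF bch])
  moreover have "(\<integral>t. I t x0 \<partial>conv x (invol x0)) = 0"
  proof -
    have "I t x0 = 0" for t using allW[of t] x0S unfolding W_def by blast
    then show ?thesis by simp
  qed
  ultimately have int0: "(\<integral>u. I x u \<partial>conv (invol x0) x0) = 0" by simp
  have "e \<in> msupp (conv (invol x0) x0)" using e_supp[of "invol x0" "invol x0"] invol_invol by simp
  then have "I x e = 0"
    using supp_zero[OF conv_sets bc_integrable[OF conv_prob conv_sets Ic2 bd_of[OF Ib]] Ic2 Inn int0] by simp
  moreover have "I x e = h x"
    unfolding I_def conv_e by (rule integral_return) (auto intro: bc_meas[OF hc])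
  ultimately show ?thesis by simp
qed

lemma part_harm:
  assumes sig: "prob_space \<sigma>" "sets \<sigma> = sets borel"
    and fc: "continuous_on UNIV (f::'a \<Rightarrow> complex)" and fb: "bounded (range f)"
    and harm: "harmonic conv invol \<sigma> f"
    and T: "bounded_linear (T::complex \<Rightarrow> real)" and Tb: "\<And>w. \<bar>T w\<bar> \<le> norm w"
  shows "(\<integral>y. (\<integral>w. T (f w) \<partial>conv (invol y) z) \<partial>\<sigma>) = T (f z)"
proof -
  obtain Bf where Bf: "\<And>x. norm (f x) \<le> Bf" using bnd_norm[OF fb] by blast
  define F where "F y = (\<integral>w. f w \<partial>conv (invol y) z)" for y
  have fint: "integrable (conv a b) f" for a b by (rule bc_integrable[OF conv_prob conv_sets fc fb])
  have TF: "(\<integral>w. T (f w) \<partial>conv (invol y) z) = T (F y)" for y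
    unfolding F_def by (rule integral_bounded_linear[OF T fint])
  have bcRe: "bcontinuous (\<lambda>w. Re (f w))" by (rule bc_T[OF fc Bf bounded_linear_Re abs_Re_le_cmod])
  have bcIm: "bcontinuous (\<lambda>w. Im (f w))" by (rule bc_T[OF fc Bf bounded_linear_Im abs_Im_le_cmod])
  have ReF: "(\<lambda>y. Re (F y)) = (\<lambda>y. \<integral>w. Re (f w) \<partial>conv (invol y) z)"
    unfolding F_def using fint by simp
  have ImF: "(\<lambda>y. Im (F y)) = (\<lambda>y. \<integral>w. Im (f w) \<partial>conv (invol y) z)"
    unfolding F_def using fint by simp
  have Fm: "F \<in> borel_measurable \<sigma>"
    unfolding borel_measurable_complex_iff ReF ImF
    using bc_meas[OF wc3[OF bcRe] sig(2)] bc_meas[OF wc3[OF bcIm] sig(2)] by simp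
  have Fint: "integrable \<sigma> F"
  proof -
    interpret prob_space \<sigma> by fact
    show ?thesis
      by (rule integrable_const_bound[where B=Bf])
         (use Fm bc_int_bound[OF conv_prob conv_sets fc Bf] in \<open>auto simp: F_def\<close>)
  qed
  have "(\<integral>y. T (F y) \<partial>\<sigma>) = T (\<integral>y. F y \<partial>\<sigma>)" by (rule integral_bounded_linear[OF T Fint])
  also have "(\<integral>y. F y \<partial>\<sigma>) = f z"
    using harm unfolding harmonic_def hval_def F_def by simp
  finally show ?thesis using TF by simp
qed

lemma real_pos:
  assumes sig: "prob_space \<sigma>" "sets \<sigma> = sets borel" and nd: "nondegenerate conv \<sigma>"
   and gc: "continuous_on UNIV (g::'a \<Rightarrow> real)" and gb: "bounded (range g)"
   and van: "\<And>\<epsilon>. \<epsilon> > 0 \<Longrightarrow> \<exists>C. compact C \<and> (\<forall>x. x \<notin> C \<longrightarrow> \<bar>g x\<bar> < \<epsilon>)"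
   and harm: "\<And>z. (\<integral>y. (\<integral>w. g w \<partial>conv (invol y) z) \<partial>\<sigma>) = g z"
   and pos: "g x1 > 0"
  shows "\<exists>c. \<forall>x. g x = c"
proof -
  obtain C where C: "compact C" "\<And>x. x \<notin> C \<Longrightarrow> \<bar>g x\<bar> < g x1" using van[OF pos] by auto
  have x1C: "x1 \<in> C"
  proof (rule ccontr)
    assume "x1 \<notin> C"
    then have "\<bar>g x1\<bar> < g x1" by (rule C(2))
    then show False by simp
  qed
  obtain x0 where x0: "x0 \<in> C" "\<And>y. y \<in> C \<Longrightarrow> g y \<le> g x0"
    using continuous_attains_sup[OF C(1) _ continuous_on_subset[OF gc]] x1C by blast
  have gmax: "g y \<le> g x0" for y
  proof (cases "y \<in> C")
    case True then show ?thesis using x0 by auto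
  next
    case False then show ?thesis using C(2)[of y] x0(2)[OF x1C] by auto
  qed
  obtain Bg where Bg: "\<And>x. \<bar>g x\<bar> \<le> Bg" using bnd_real[OF gb] by blast
  define h where "h x = g x0 - g x" for x
  have hc: "continuous_on UNIV h" unfolding h_def by (intro continuous_intros gc)
  have hb: "bounded (range h)"
  proof (rule bd_of[where B="\<bar>g x0\<bar> + Bg"])
    fix x
    have "\<bar>g x0 - g x\<bar> \<le> \<bar>g x0\<bar> + \<bar>g x\<bar>" by (rule abs_triangle_ineq4)
    then show "\<bar>h x\<bar> \<le> \<bar>g x0\<bar> + Bg" using Bg[of x] unfolding h_def by linarith
  qed
  have hnn: "h x \<ge> 0" for x using gmax[of x] by (simp add: h_def)
  have bcg: "bcontinuous g" using gc gb by (simp add: bcontinuous_def)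
  have hharm: "(\<integral>y. (\<integral>w. h w \<partial>conv (invol y) z) \<partial>\<sigma>) = h z" for z
  proof -
    have gint: "integrable (conv a b) g" for a b by (rule bc_integrable[OF conv_prob conv_sets gc gb])
    have inner: "(\<integral>w. h w \<partial>conv a b) = g x0 - (\<integral>w. g w \<partial>conv a b)" for a b
    proof -
      interpret prob_space "conv a b" by (rule conv_prob)
      show ?thesis unfolding h_def using gint by (simp add: prob_space)
    qed
    have Gint: "integrable \<sigma> (\<lambda>y. \<integral>w. g w \<partial>conv (invol y) z)"
      by (rule bc_integrable[OF sig wc3[OF bcg] bd_of[OF conv_bound[OF gc Bg]]])
    interpret prob_space \<sigma> by fact
    show ?thesis unfolding inner using Gint harm[of z] by (simp add: prob_space h_def)
  qed
  have hz: "h x = 0" for x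
    by (rule core[OF sig nd hc hb hnn _ hharm]) (simp add: h_def)
  have "g x = g x0" for x using hz[of x] unfolding h_def by linarith
  then show ?thesis by blast
qed

lemma real_const:
  assumes sig: "prob_space \<sigma>" "sets \<sigma> = sets borel" and nd: "nondegenerate conv \<sigma>"
   and gc: "continuous_on UNIV (g::'a \<Rightarrow> real)" and gb: "bounded (range g)"
   and van: "\<And>\<epsilon>. \<epsilon> > 0 \<Longrightarrow> \<exists>C. compact C \<and> (\<forall>x. x \<notin> C \<longrightarrow> \<bar>g x\<bar> < \<epsilon>)"
   and harm: "\<And>z. (\<integral>y. (\<integral>w. g w \<partial>conv (invol y) z) \<partial>\<sigma>) = g z"
  shows "\<exists>c. \<forall>x. g x = c"
proof (cases "\<exists>x1. g x1 > 0")
  case True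
  then show ?thesis using real_pos[OF sig nd gc gb van harm] by blast
next
  case F1: False
  show ?thesis
  proof (cases "\<exists>x1. g x1 < 0")
    case True
    then obtain x1 where "(\<lambda>x. - g x) x1 > 0" by auto
    moreover have "continuous_on UNIV (\<lambda>x. - g x)" by (intro continuous_intros gc)
    moreover have "bounded (range (\<lambda>x. - g x))"
    proof -
      obtain Bg where Bg: "\<And>x. \<bar>g x\<bar> \<le> Bg" using bnd_real[OF gb] by blast
      show ?thesis by (rule bd_of[where B=Bg]) (simp add: Bg)
    qed
    moreover have "\<exists>C. compact C \<and> (\<forall>x. x \<notin> C \<longrightarrow> \<bar>- g x\<bar> < \<epsilon>)" if "\<epsilon> > 0" for \<epsilon>
      using van[OF that] by simp
    moreover have "(\<integral>y. (\<integral>w. - g w \<partial>conv (invol y) z) \<partial>\<sigma>) = - g z" for z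
      using harm[of z] by simp
    ultimately obtain c where "\<forall>x. - g x = c" using real_pos[OF sig nd, of "\<lambda>x. - g x"] by blast
    then show ?thesis by (intro exI[of _ "- c"]) auto
  next
    case False
    have "g x = 0" for x
    proof -
      have "\<not> g x > 0" "\<not> g x < 0" using F1 False by auto
      then show ?thesis by linarith
    qed
    then show ?thesis by blast
  qed
qed

end

theorem theorem4p7:
  fixes conv :: "'a::t2_space \<Rightarrow> 'a \<Rightarrow> 'a measure"
    and invol :: "'a \<Rightarrow> 'a" and e :: 'a
    and haar \<sigma> :: "'a measure" and f :: "'a \<Rightarrow> complex"
  assumes "hypergroup conv invol e"
    and "left_haar conv haar"
    and "prob_space \<sigma>" and "sets \<sigma> = sets borel"
    and "nondegenerate conv \<sigma>"
    and "continuous_on UNIV f" and "bounded (range f)"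
    and "harmonic conv invol \<sigma> f"
    and "vanishes_at_infinity f"
  shows "\<exists>c. \<forall>x. f x = c"
proof -
  interpret hg conv invol e using assms(1) by (rule hg.intro)
  from assms(7) obtain Bf where Bf0: "\<forall>y\<in>range f. norm y \<le> Bf" unfolding bounded_iff by blast
  have Bf: "norm (f x) \<le> Bf" for x using Bf0 by simp
  have vanT: "\<exists>C. compact C \<and> (\<forall>x. x \<notin> C \<longrightarrow> \<bar>T (f x)\<bar> < \<epsilon>)"
    if "\<epsilon> > 0" "\<And>w. \<bar>T w\<bar> \<le> norm w" for \<epsilon> and T :: "complex \<Rightarrow> real"
  proof -
    have "\<exists>C. compact C \<and> (\<forall>x. x \<notin> C \<longrightarrow> norm (f x) < \<epsilon>)"
      using assms(9) that(1) unfolding vanishes_at_infinity_def by simp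
    then obtain C where C: "compact C" "\<forall>x. x \<notin> C \<longrightarrow> norm (f x) < \<epsilon>"
      by (elim exE conjE)
    show ?thesis
    proof (intro exI conjI allI impI)
      show "compact C" by (rule C(1))
      fix x assume "x \<notin> C"
      have "\<bar>T (f x)\<bar> \<le> norm (f x)" by (rule that(2))
      also have "norm (f x) < \<epsilon>" using C(2) \<open>x \<notin> C\<close> by blast
      finally show "\<bar>T (f x)\<bar> < \<epsilon>" .
    qed
  qed
  have "\<exists>c. \<forall>x. Re (f x) = c"
  proof -
    have bc: "bcontinuous (\<lambda>x. Re (f x))" by (rule bc_T[OF assms(6) Bf bounded_linear_Re abs_Re_le_cmod])
    have c1: "continuous_on UNIV (\<lambda>x. Re (f x))" using bc unfolding bcontinuous_def by blast
    have b1: "bounded (range (\<lambda>x. Re (f x)))" using bc unfolding bcontinuous_def by blast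
    have v1: "\<exists>C. compact C \<and> (\<forall>x. x \<notin> C \<longrightarrow> \<bar>Re (f x)\<bar> < \<epsilon>)" if "\<epsilon> > 0" for \<epsilon>
      by (rule vanT[OF that abs_Re_le_cmod])
    have h1: "(\<integral>y. (\<integral>w. Re (f w) \<partial>conv (invol y) z) \<partial>\<sigma>) = Re (f z)" for z
      by (rule part_harm[OF assms(3,4,6,7,8) bounded_linear_Re abs_Re_le_cmod])
    show ?thesis by (rule real_const[OF assms(3,4,5) c1 b1 v1 h1])
  qed
  moreover have "\<exists>c. \<forall>x. Im (f x) = c"
  proof -
    have bc: "bcontinuous (\<lambda>x. Im (f x))" by (rule bc_T[OF assms(6) Bf bounded_linear_Im abs_Im_le_cmod])
    have c1: "continuous_on UNIV (\<lambda>x. Im (f x))" using bc unfolding bcontinuous_def by blast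
    have b1: "bounded (range (\<lambda>x. Im (f x)))" using bc unfolding bcontinuous_def by blast
    have v1: "\<exists>C. compact C \<and> (\<forall>x. x \<notin> C \<longrightarrow> \<bar>Im (f x)\<bar> < \<epsilon>)" if "\<epsilon> > 0" for \<epsilon>
      by (rule vanT[OF that abs_Im_le_cmod])
    have h1: "(\<integral>y. (\<integral>w. Im (f w) \<partial>conv (invol y) z) \<partial>\<sigma>) = Im (f z)" for z
      by (rule part_harm[OF assms(3,4,6,7,8) bounded_linear_Im abs_Im_le_cmod])
    show ?thesis by (rule real_const[OF assms(3,4,5) c1 b1 v1 h1])
  qed
  ultimately obtain a b where "\<forall>x. Re (f x) = a" "\<forall>x. Im (f x) = b" by blast
  then have "\<forall>x. f x = Complex a b" by (simp add: complex_eq_iff)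
  then show ?thesis by blast
qed

end
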